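(* For every integer $n\geq 2$, every $1\leq i\leq n-1$ and every integer $0\leq s < i/2$, we have $w_{i,s}' < w_{i,s}$.
   Context: In $\{0,1,2\}^n$ (ordered coordinatewise), $L_i$ is the set of vectors with coordinate sum $i$, $L_i^s$ the elements of $L_i$ with exactly $s$ coordinates equal to $2$, $L_i^{\geq s}=\bigcup_{r\geq s}L_i^r$, $L_i^{\leq s}=\bigcup_{r\leq s}L_i^r$. For such $i,s$: \[w_{i,s}=\frac{|L_i||L_{i+1}^{\geq s+1}| - |L_{i+1}||L_i^{\geq s+1}|}{|L_i^s||L_i||L_{i+1}|(i-2s)},\qquad w_{i,s}'=\frac{|L_i||L_{i+1}^{\leq s}| - |L_{i+1}||L_i^{\leq s-1}|}{|L_i^s||L_i||L_{i+1}|(n-i+s)}.\] *)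

theory Defs
  imports Complex_Main "HOL-Library.FuncSet"
begin

text \<open>Vectors of \<open>{0,1,2}^n\<close> are represented as functions \<open>nat \<Rightarrow> nat\<close>
  supported on \<open>{..<n}\<close> (extensional functions).\<close>

definition cube :: "nat \<Rightarrow> (nat \<Rightarrow> nat) set" where
  "cube n = PiE {..<n} (\<lambda>_. {0, 1, 2})"

definition twos :: "nat \<Rightarrow> (nat \<Rightarrow> nat) \<Rightarrow> nat" where
  "twos n x = card {j. j < n \<and> x j = 2}"

definition L :: "nat \<Rightarrow> nat \<Rightarrow> (nat \<Rightarrow> nat) set" where
  "L n i = {x \<in> cube n. (\<Sum>j<n. x j) = i}"

definition Ls :: "nat \<Rightarrow> nat \<Rightarrow> nat \<Rightarrow> (nat \<Rightarrow> nat) set" where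
  "Ls n i s = {x \<in> L n i. twos n x = s}"

definition Lge :: "nat \<Rightarrow> nat \<Rightarrow> int \<Rightarrow> (nat \<Rightarrow> nat) set" where
  "Lge n i s = {x \<in> L n i. int (twos n x) \<ge> s}"

text \<open>\<open>L_i^{\<le>s}\<close> (integer index, so that \<open>L_i^{\<le>-1}\<close> is empty)\<close>
definition Lle :: "nat \<Rightarrow> nat \<Rightarrow> int \<Rightarrow> (nat \<Rightarrow> nat) set" where
  "Lle n i s = {x \<in> L n i. int (twos n x) \<le> s}"

definition w :: "nat \<Rightarrow> nat \<Rightarrow> nat \<Rightarrow> real" where
  "w n i s =
     (real (card (L n i)) * real (card (Lge n (i+1) (int s + 1)))
       - real (card (L n (i+1))) * real (card (Lge n i (int s + 1))))
     / (real (card (Ls n i s)) * real (card (L n i)) * real (card (L n (i+1)))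
        * (real i - 2 * real s))"

definition w' :: "nat \<Rightarrow> nat \<Rightarrow> nat \<Rightarrow> real" where
  "w' n i s =
     (real (card (L n i)) * real (card (Lle n (i+1) (int s)))
       - real (card (L n (i+1))) * real (card (Lle n i (int s - 1))))
     / (real (card (Ls n i s)) * real (card (L n i)) * real (card (L n (i+1)))
        * (real n - real i + real s))"

end

theory Submission
  imports Defs
begin

lemma finite_cube: "finite (cube n)"
  unfolding cube_def by (intro finite_PiE) auto

lemma sum_if_const:
  assumes "finite A"
  shows "(\<Sum>j\<in>A. if P j then (c::nat) else 0) = c * card {j\<in>A. P j}"
proof -
  have "(\<Sum>j\<in>A. if P j then c else 0) = (\<Sum>j\<in>{j\<in>A. P j}. c)"
    using sum.inter_filter[OF assms, of "\<lambda>_. c" P] by simp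
  then show ?thesis by simp
qed

lemma cube_sum:
  assumes "x \<in> cube n"
  shows "(\<Sum>j<n. x j) = 2 * twos n x + card {j. j<n \<and> x j = 1}"
proof -
  have xj: "\<And>j. j < n \<Longrightarrow> x j \<in> {0,1,2}" using assms unfolding cube_def by (auto simp: PiE_iff)
  have "(\<Sum>j<n. x j) = (\<Sum>j<n. (if x j = 2 then 2 else 0) + (if x j = 1 then 1 else 0))"
    by (rule sum.cong) (use xj in auto)
  also have "\<dots> = (\<Sum>j<n. if x j = 2 then 2 else 0) + (\<Sum>j<n. if x j = 1 then 1 else 0)"
    by (rule sum.distrib)
  also have "(\<Sum>j<n. if x j = 2 then 2 else 0) = 2 * card {j\<in>{..<n}. x j = 2}"
    by (rule sum_if_const) simp
  also have "(\<Sum>j<n. if x j = 1 then 1 else 0) = 1 * card {j\<in>{..<n}. x j = 1}"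
    by (rule sum_if_const) simp
  finally show ?thesis unfolding twos_def by simp
qed

definition Sg :: "nat \<Rightarrow> nat \<Rightarrow> nat \<Rightarrow> (nat set \<times> nat set) set" where
  "Sg n k r = (SIGMA S:{S. S \<subseteq> {..<n} \<and> card S = r}. {U. U \<subseteq> {..<n} - S \<and> card U = k - 2*r})"

lemma card_Sg: "card (Sg n k r) = (n choose r) * ((n - r) choose (k - 2*r))"
proof -
  have fin: "finite {S. S \<subseteq> {..<n} \<and> card S = r}" by (rule finite_subset[of _ "Pow {..<n}"]) auto
  have "card (Sg n k r) = (\<Sum>S\<in>{S. S \<subseteq> {..<n} \<and> card S = r}. card {U. U \<subseteq> {..<n} - S \<and> card U = k - 2*r})"
    unfolding Sg_def by (rule card_SigmaI[OF fin]) auto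
  also have "\<dots> = (\<Sum>S\<in>{S. S \<subseteq> {..<n} \<and> card S = r}. (n - r) choose (k - 2*r))"
  proof (rule sum.cong[OF refl])
    fix S assume "S \<in> {S. S \<subseteq> {..<n} \<and> card S = r}"
    then have S: "S \<subseteq> {..<n}" "card S = r" by auto
    have "card ({..<n} - S) = n - r" using S by (simp add: card_Diff_subset finite_subset)
    then show "card {U. U \<subseteq> {..<n} - S \<and> card U = k - 2*r} = (n - r) choose (k - 2*r)"
      using n_subsets[of "{..<n} - S" "k - 2*r"] by simp
  qed
  also have "\<dots> = (n choose r) * ((n - r) choose (k - 2*r))"
    using n_subsets[of "{..<n}" r] by simp
  finally show ?thesis .
qed

definition enc :: "nat \<Rightarrow> (nat \<Rightarrow> nat) \<Rightarrow> nat set \<times> nat set" where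
  "enc n x = ({j. j<n \<and> x j = 2}, {j. j<n \<and> x j = 1})"

definition dec :: "nat \<Rightarrow> nat set \<times> nat set \<Rightarrow> (nat \<Rightarrow> nat)" where
  "dec n p = (\<lambda>j. if j \<in> fst p then 2 else if j \<in> snd p then 1 else if j < n then 0 else undefined)"

lemma card_Ls:
  assumes "2*r \<le> k"
  shows "card (Ls n k r) = (n choose r) * ((n - r) choose (k - 2*r))"
proof -
  have inj: "inj_on (enc n) (Ls n k r)"
  proof (rule inj_onI)
    fix x y assume x: "x \<in> Ls n k r" and y: "y \<in> Ls n k r" and e: "enc n x = enc n y"
    have xc: "x \<in> cube n" and yc: "y \<in> cube n" using x y by (auto simp: Ls_def L_def)
    show "x = y"
    proof
      fix j
      show "x j = y j"
      proof (cases "j < n")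
        case True
        have "x j \<in> {0,1,2}" "y j \<in> {0,1,2}" using xc yc True by (auto simp: cube_def PiE_iff)
        moreover have "x j = 2 \<longleftrightarrow> y j = 2" "x j = 1 \<longleftrightarrow> y j = 1"
          using e True unfolding enc_def by (auto simp: set_eq_iff)
        ultimately show ?thesis by auto
      next
        case False
        then show ?thesis using xc yc by (auto simp: cube_def PiE_iff extensional_def)
      qed
    qed
  qed
  have img: "enc n ` Ls n k r = Sg n k r"
  proof
    show "enc n ` Ls n k r \<subseteq> Sg n k r"
    proof
      fix p assume "p \<in> enc n ` Ls n k r"
      then obtain x where x: "x \<in> Ls n k r" and p: "p = enc n x" by auto
      have xc: "x \<in> cube n" and s: "(\<Sum>j<n. x j) = k" and t: "twos n x = r"
        using x by (auto simp: Ls_def L_def)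
      have "card {j. j<n \<and> x j = 1} = k - 2*r" using cube_sum[OF xc] s t by simp
      then show "p \<in> Sg n k r" using t unfolding p enc_def Sg_def twos_def by auto
    qed
  next
    show "Sg n k r \<subseteq> enc n ` Ls n k r"
    proof
      fix p assume p: "p \<in> Sg n k r"
      obtain S U where pSU: "p = (S, U)" by (cases p)
      have S: "S \<subseteq> {..<n}" "card S = r" and U: "U \<subseteq> {..<n} - S" "card U = k - 2*r"
        using p unfolding pSU Sg_def by auto
      define x where "x = dec n (S, U)"
      have xc: "x \<in> cube n" using S U unfolding x_def dec_def cube_def by (auto simp: PiE_iff extensional_def)
      have e2: "{j. j<n \<and> x j = 2} = S" using S U unfolding x_def dec_def by auto
      have e1: "{j. j<n \<and> x j = 1} = U" using S U unfolding x_def dec_def by auto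
      have tw: "twos n x = r" unfolding twos_def e2 using S by simp
      have "(\<Sum>j<n. x j) = k" using cube_sum[OF xc] tw e1 U assms by simp
      then have "x \<in> Ls n k r" using xc tw by (simp add: Ls_def L_def)
      moreover have "enc n x = p" unfolding enc_def e1 e2 pSU by simp
      ultimately show "p \<in> enc n ` Ls n k r" by blast
    qed
  qed
  have "card (Ls n k r) = card (enc n ` Ls n k r)" using card_image[OF inj] by simp
  also have "\<dots> = (n choose r) * ((n - r) choose (k - 2*r))" using img card_Sg by simp
  finally show ?thesis .
qed

lemma Ls_empty:
  assumes "k < 2*r"
  shows "Ls n k r = {}"
proof -
  { fix x assume x: "x \<in> Ls n k r"
    have xc: "x \<in> cube n" and s: "(\<Sum>j<n. x j) = k" and t: "twos n x = r"
      using x by (auto simp: Ls_def L_def)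
    have False using cube_sum[OF xc] s t assms by simp }
  then show ?thesis by blast
qed

lemma twos_le: "twos n x \<le> n"
proof -
  have "twos n x \<le> card {..<n}" unfolding twos_def by (rule card_mono) auto
  then show ?thesis by simp
qed

lemma finite_L: "finite (L n k)"
  by (rule finite_subset[OF _ finite_cube[of n]]) (auto simp: L_def)

lemma card_fib:
  assumes "finite R"
  shows "card {x\<in>L n k. twos n x \<in> R} = (\<Sum>r\<in>R. card (Ls n k r))"
proof -
  have "{x\<in>L n k. twos n x \<in> R} = (\<Union>r\<in>R. Ls n k r)" by (auto simp: Ls_def)
  moreover have "card (\<Union>r\<in>R. Ls n k r) = (\<Sum>r\<in>R. card (Ls n k r))"
    by (rule card_UN_disjoint[OF assms]) (auto simp: Ls_def intro: finite_subset[OF _ finite_L])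
  ultimately show ?thesis by simp
qed

lemma card_L_sum: "card (L n k) = (\<Sum>r\<le>n. card (Ls n k r))"
proof -
  have "L n k = {x\<in>L n k. twos n x \<in> {..n}}" using twos_le by auto
  then show ?thesis using card_fib[of "{..n}" n k] by simp
qed

lemma card_Lge_sum: "card (Lge n k (int s + 1)) = (\<Sum>r\<in>{s<..n}. card (Ls n k r))"
proof -
  have "Lge n k (int s + 1) = {x\<in>L n k. twos n x \<in> {s<..n}}" using twos_le by (auto simp: Lge_def)
  then show ?thesis using card_fib[of "{s<..n}" n k] by simp
qed

lemma card_Lle_sum: "card (Lle n k (int s)) = (\<Sum>r\<le>s. card (Ls n k r))"
proof -
  have "Lle n k (int s) = {x\<in>L n k. twos n x \<in> {..s}}" by (auto simp: Lle_def)
  then show ?thesis using card_fib[of "{..s}" n k] by simp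
qed

lemma card_Lle1_sum: "card (Lle n k (int s - 1)) = (\<Sum>r<s. card (Ls n k r))"
proof -
  have "Lle n k (int s - 1) = {x\<in>L n k. twos n x \<in> {..<s}}" by (auto simp: Lle_def)
  then show ?thesis using card_fib[of "{..<s}" n k] by simp
qed

lemma choose_step: "(N choose j) * (N - j) = (N choose Suc j) * Suc j"
proof -
  have "(N - j) * (N choose j) = N * ((N - 1) choose j)" by (rule binomial_absorb_comp)
  moreover have "Suc j * (N choose Suc j) = N * ((N - 1) choose j)" by (rule binomial_absorption)
  ultimately show ?thesis by (simp add: mult.commute)
qed

lemma E2_nat:
  assumes "2*r \<le> k" "k \<le> n"
  shows "card (Ls n k r) * (n - k + r) = card (Ls n (Suc k) r) * (Suc k - 2*r)"
proof -
  have e: "n - k + r = (n - r) - (k - 2*r)" "Suc k - 2*r = Suc (k - 2*r)" "Suc k - 2*r = Suc (k - 2*r)"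
    using assms by auto
  have "card (Ls n k r) * (n - k + r) = (n choose r) * (((n - r) choose (k - 2*r)) * ((n - r) - (k - 2*r)))"
    using card_Ls[OF assms(1)] e by simp
  also have "\<dots> = (n choose r) * (((n - r) choose Suc (k - 2*r)) * Suc (k - 2*r))"
    by (simp only: choose_step)
  also have "\<dots> = card (Ls n (Suc k) r) * (Suc k - 2*r)"
    using card_Ls[of r "Suc k" n] assms e by (simp add: algebra_simps)
  finally show ?thesis .
qed

lemma E1_nat:
  assumes "2*r < k"
  shows "card (Ls n k r) * (k - 2*r) = Suc r * card (Ls n (Suc k) (Suc r))"
proof -
  obtain j where j: "k - 2*r = Suc j" using assms by (metis Suc_diff_Suc less_imp_Suc_add add_Suc diff_add_inverse zero_less_diff)
  have j2: "Suc k - 2 * Suc r = j" using j assms by simp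
  have "card (Ls n k r) * (k - 2*r) = (n choose r) * (Suc j * ((n - r) choose Suc j))"
    using card_Ls[of r k n] assms j by (simp add: algebra_simps)
  also have "\<dots> = (n choose r) * ((n - r) * ((n - r - 1) choose j))"
    by (simp only: binomial_absorption)
  also have "\<dots> = ((n - r) * (n choose r)) * ((n - Suc r) choose j)" by simp
  also have "\<dots> = (n * ((n - 1) choose r)) * ((n - Suc r) choose j)" by (simp add: binomial_absorb_comp)
  also have "\<dots> = (Suc r * (n choose Suc r)) * ((n - Suc r) choose j)" by (simp only: binomial_absorption)
  also have "\<dots> = Suc r * card (Ls n (Suc k) (Suc r))"
    using card_Ls[of "Suc r" "Suc k" n] assms j2 by (simp add: algebra_simps)
  finally show ?thesis .
qed

lemma E2_real:
  assumes "i < n"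
  shows "real (card (Ls n i r)) * (real n - real i + real r) = real (card (Ls n (Suc i) r)) * (real i + 1 - 2 * real r)"
proof (cases "2*r \<le> i")
  case True
  have "real (card (Ls n i r) * (n - i + r)) = real (card (Ls n (Suc i) r) * (Suc i - 2*r))"
    using E2_nat[OF True] assms by simp
  then have "real (card (Ls n i r)) * real (n - i + r) = real (card (Ls n (Suc i) r)) * real (Suc i - 2*r)"
    by (simp only: of_nat_mult)
  moreover have "real (n - i + r) = real n - real i + real r" using assms by (simp add: of_nat_diff)
  moreover have "real (Suc i - 2*r) = real i + 1 - 2 * real r" using True by (simp add: of_nat_diff)
  ultimately show ?thesis by (simp add: algebra_simps)
next
  case False
  then have "Ls n i r = {}" by (intro Ls_empty) simp
  moreover have "real i + 1 - 2 * real r = 0 \<or> Ls n (Suc i) r = {}"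
  proof (cases "2*r = Suc i")
    case True then show ?thesis by (simp add: of_nat_mult[symmetric])
  next
    case False2: False
    then have "Suc i < 2*r" using False by simp
    then show ?thesis using Ls_empty by blast
  qed
  ultimately show ?thesis by auto
qed

lemma E1_real:
  "real (card (Ls n i r)) * (real i - 2 * real r) = real (Suc r) * real (card (Ls n (Suc i) (Suc r)))"
proof (cases "2*r < i")
  case True
  have "real (card (Ls n i r) * (i - 2*r)) = real (Suc r * card (Ls n (Suc i) (Suc r)))"
    using E1_nat[OF True] by simp
  then have "real (card (Ls n i r)) * real (i - 2*r) = real (Suc r) * real (card (Ls n (Suc i) (Suc r)))"
    by (simp only: of_nat_mult)
  moreover have "real (i - 2*r) = real i - 2 * real r" using True by (simp add: of_nat_diff)
  ultimately show ?thesis by simp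
next
  case False
  have "Ls n (Suc i) (Suc r) = {}" using False by (intro Ls_empty) simp
  moreover have "real i - 2 * real r = 0 \<or> Ls n i r = {}"
  proof (cases "2*r = i")
    case True then show ?thesis by (simp add: of_nat_mult[symmetric])
  next
    case False2: False
    then show ?thesis using False Ls_empty by (metis linorder_neqE_nat)
  qed
  ultimately show ?thesis by auto
qed

lemma Ls_pos:
  assumes "2*r \<le> k" "k \<le> n + r"
  shows "card (Ls n k r) > 0"
proof -
  have "r \<le> n" using assms by simp
  moreover have "k - 2*r \<le> n - r" using assms by simp
  ultimately show ?thesis using card_Ls[OF assms(1)] by simp
qed

lemma key_c:
  fixes a b :: "nat \<Rightarrow> real" and n i :: nat
  assumes i1: "1 \<le> i" and iN: "i < n"
    and E1: "\<And>r. a r * (real i - 2 * real r) = real (Suc r) * b (Suc r)"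
    and E2: "\<And>r. a r * (real n - real i + real r) = b r * (real i + 1 - 2 * real r)"
    and a0: "\<And>r. i < 2*r \<Longrightarrow> a r = 0"
    and bpos: "\<And>r. 2*r \<le> i+1 \<Longrightarrow> b r > 0"
    and bnn: "\<And>r. b r \<ge> 0"
  shows "real n * (\<Sum>r\<le>n. a r) < (real i + 1) * (\<Sum>r\<le>n. b r)"
proof -
  define m where "m = real n - real i"
  have m1: "m \<ge> 1" using iN unfolding m_def by linarith
  define \<beta> where "\<beta> r = b r / (m + real r)" for r
  have mr: "\<And>r. m + real r > 0" using m1 by (simp add: add_pos_nonneg)
  have hb: "\<And>r. b r = \<beta> r * (m + real r)"
  proof -
    fix r
    have "m + real r \<noteq> 0" using mr[of r] by simp
    then show "b r = \<beta> r * (m + real r)" unfolding \<beta>_def by simp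
  qed
  have ha: "\<And>r. a r = \<beta> r * (real i + 1 - 2 * real r)"
  proof -
    fix r
    have "a r * (m + real r) = \<beta> r * (real i + 1 - 2 * real r) * (m + real r)"
      using E2[of r] hb[of r] unfolding m_def by (simp add: algebra_simps)
    then show "a r = \<beta> r * (real i + 1 - 2 * real r)" using mr[of r] by simp
  qed
  have bnn': "\<And>r. \<beta> r \<ge> 0" unfolding \<beta>_def using mr bnn by (simp add: less_imp_le)
  define W where "W = (\<Sum>r\<le>n. \<beta> r)"
  define M where "M = (\<Sum>r\<le>n. real r * \<beta> r)"
  define M2 where "M2 = (\<Sum>r\<le>n. (real r)^2 * \<beta> r)"
  obtain n' where n': "n = Suc n'" using iN by (cases n) auto
  have rel: "(\<Sum>r\<le>n. real r * b r) = (\<Sum>r\<le>n. a r * (real i - 2 * real r))"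
  proof -
    have "(\<Sum>r\<le>n. real r * b r) = real 0 * b 0 + (\<Sum>r\<le>n'. real (Suc r) * b (Suc r))"
      unfolding n' by (rule sum.atMost_Suc_shift)
    also have "\<dots> = (\<Sum>r\<le>n'. a r * (real i - 2 * real r))" using E1 by simp
    also have "\<dots> = (\<Sum>r\<le>n. a r * (real i - 2 * real r))"
      using a0[of "Suc n'"] iN unfolding n' by simp
    finally show ?thesis .
  qed
  have s1: "(\<Sum>r\<le>n. real r * b r) = m * M + M2"
  proof -
    have "(\<Sum>r\<le>n. real r * b r) = (\<Sum>r\<le>n. m * (real r * \<beta> r) + (real r)^2 * \<beta> r)"
      by (rule sum.cong) (auto simp: hb power2_eq_square algebra_simps)
    also have "\<dots> = m * M + M2" by (simp add: sum.distrib sum_distrib_left M_def M2_def)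
    finally show ?thesis .
  qed
  have s2: "(\<Sum>r\<le>n. a r * (real i - 2 * real r)) = real i * (real i + 1) * W - (4 * real i + 2) * M + 4 * M2"
  proof -
    have "(\<Sum>r\<le>n. a r * (real i - 2 * real r)) = (\<Sum>r\<le>n. real i * (real i + 1) * \<beta> r - (4 * real i + 2) * (real r * \<beta> r) + 4 * ((real r)^2 * \<beta> r))"
      by (rule sum.cong) (auto simp: ha power2_eq_square algebra_simps)
    also have "\<dots> = real i * (real i + 1) * W - (4 * real i + 2) * M + 4 * M2"
      by (simp add: sum.distrib sum_subtractf sum_distrib_left W_def M_def M2_def)
    finally show ?thesis .
  qed
  have sA: "(\<Sum>r\<le>n. a r) = (real i + 1) * W - 2 * M"
  proof -
    have "(\<Sum>r\<le>n. a r) = (\<Sum>r\<le>n. (real i + 1) * \<beta> r - 2 * (real r * \<beta> r))"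
      by (rule sum.cong) (auto simp: ha algebra_simps)
    also have "\<dots> = (real i + 1) * W - 2 * M"
      by (simp add: sum_subtractf sum_distrib_left W_def M_def)
    finally show ?thesis .
  qed
  have sB: "(\<Sum>r\<le>n. b r) = m * W + M"
  proof -
    have "(\<Sum>r\<le>n. b r) = (\<Sum>r\<le>n. m * \<beta> r + real r * \<beta> r)"
      by (rule sum.cong) (auto simp: hb algebra_simps)
    also have "\<dots> = m * W + M"
      by (simp add: sum.distrib sum_distrib_left W_def M_def)
    finally show ?thesis .
  qed
  have b0: "\<beta> 0 > 0" using bpos[of 0] mr[of 0] unfolding \<beta>_def by simp
  have b1: "\<beta> 1 > 0" using bpos[of 1] mr[of 1] i1 unfolding \<beta>_def by simp
  have W0: "W > 0"
  proof -
    have "\<beta> 0 \<le> W" unfolding W_def by (rule member_le_sum) (auto simp: bnn')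
    then show ?thesis using b0 by simp
  qed
  have M0: "M > 0"
  proof -
    have "real 1 * \<beta> 1 \<le> M" unfolding M_def using iN
      by (intro member_le_sum[of 1 "{..n}" "\<lambda>r. real r * \<beta> r"]) (auto simp: bnn')
    then show ?thesis using b1 by simp
  qed
  have CS: "W * M2 > M^2"
  proof -
    define V where "V = (\<Sum>r\<le>n. \<beta> r * (real r * W - M)^2)"
    have "V = (\<Sum>r\<le>n. W^2 * ((real r)^2 * \<beta> r) - 2 * W * M * (real r * \<beta> r) + M^2 * \<beta> r)"
      unfolding V_def by (rule sum.cong) (auto simp: power2_eq_square algebra_simps)
    also have "\<dots> = W^2 * M2 - 2 * W * M * M + M^2 * W"
      by (simp add: sum.distrib sum_subtractf sum_distrib_left W_def M_def M2_def)
    finally have V1: "V = W * (W * M2 - M^2)" by (simp add: power2_eq_square algebra_simps)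
    have "\<beta> 0 * (real 0 * W - M)^2 \<le> V" unfolding V_def
      by (intro member_le_sum[of 0 "{..n}" "\<lambda>r. \<beta> r * (real r * W - M)^2"]) (auto simp: bnn')
    then have "\<beta> 0 * M^2 \<le> V" by simp
    moreover have "\<beta> 0 * M^2 > 0" using b0 M0 by simp
    ultimately have "W * (W * M2 - M^2) > 0" using V1 by simp
    then have "W * M2 - M^2 > 0" using W0 by (simp add: zero_less_mult_iff)
    then show ?thesis by simp
  qed
  define d where "d = real i * (real i + 1)"
  define c where "c = m + 4 * real i + 2"
  define k where "k = 2 * m + 3 * real i + 1"
  have R: "3 * M2 = c * M - d * W" using rel s1 s2 unfolding c_def d_def by (simp add: algebra_simps)
  have neg: "3 * M^2 - c * M * W + d * W^2 < 0"
  proof -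
    have "3 * (W * M2) > 3 * M^2" using CS by simp
    moreover have "3 * (W * M2) = W * (c * M - d * W)"
    proof -
      have "3 * (W * M2) = W * (3 * M2)" by (simp add: algebra_simps)
      also have "\<dots> = W * (c * M - d * W)" using R by simp
      finally show ?thesis .
    qed
    ultimately show ?thesis by (simp add: power2_eq_square algebra_simps)
  qed
  have goal: "k * M > d * W"
  proof (rule ccontr)
    assume "\<not> k * M > d * W"
    then have H: "d * W - k * M \<ge> 0" by simp
    have k0: "k > 0" unfolding k_def using m1 by simp
    have d0: "d \<ge> 0" unfolding d_def by simp
    have ck: "c * k - 6 * d \<ge> 0"
    proof -
      have "c * k - 6 * d = 2*m^2 + 11*m*real i + 5*m + 6*(real i)^2 + 4*real i + 2"
        unfolding c_def k_def d_def by (simp add: power2_eq_square algebra_simps)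
      moreover have "2*m^2 + 11*m*real i + 5*m + 6*(real i)^2 + 4*real i + 2 \<ge> 0"
        using m1 by (simp add: add_nonneg_nonneg)
      ultimately show ?thesis by simp
    qed
    have X: "c * k * W - 3 * k * M - 3 * d * W \<ge> 0"
    proof -
      have "3 * k * M \<le> 3 * d * W" using H by simp
      moreover have "c * k * W - 6 * d * W = (c * k - 6 * d) * W" by (simp add: algebra_simps)
      moreover have "(c * k - 6 * d) * W \<ge> 0" using ck W0 by simp
      ultimately show ?thesis by linarith
    qed
    have Y: "3 * d - c * k + k^2 = (m - 1) * (2 * m + real i + 1)"
      unfolding c_def k_def d_def by (simp add: power2_eq_square algebra_simps)
    have Y0: "3 * d - c * k + k^2 \<ge> 0" using Y m1 by simp
    have id: "k^2 * (3 * M^2 - c * M * W + d * W^2) = (d * W - k * M) * (c * k * W - 3 * k * M - 3 * d * W) + W^2 * d * (3 * d - c * k + k^2)"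
      by (simp add: power2_eq_square algebra_simps)
    have "(d * W - k * M) * (c * k * W - 3 * k * M - 3 * d * W) \<ge> 0" using H X by simp
    moreover have "W^2 * d * (3 * d - c * k + k^2) \<ge> 0" using d0 Y0 by simp
    ultimately have "k^2 * (3 * M^2 - c * M * W + d * W^2) \<ge> 0" using id by simp
    moreover have "k^2 > 0" using k0 by simp
    ultimately have "3 * M^2 - c * M * W + d * W^2 \<ge> 0" by (simp add: zero_le_mult_iff)
    then show False using neg by simp
  qed
  have "(real i + 1) * (\<Sum>r\<le>n. b r) - real n * (\<Sum>r\<le>n. a r) = k * M - d * W"
    unfolding sA sB k_def d_def m_def by (simp add: algebra_simps)
  then show ?thesis using goal by simp
qed

lemma key_main:
  fixes a b :: "nat \<Rightarrow> real" and n i s :: nat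
  assumes i1: "1 \<le> i" and iN: "i < n" and s2: "2*s < i"
    and E1: "\<And>r. a r * (real i - 2 * real r) = real (Suc r) * b (Suc r)"
    and E2: "\<And>r. a r * (real n - real i + real r) = b r * (real i + 1 - 2 * real r)"
    and a0: "\<And>r. i < 2*r \<Longrightarrow> a r = 0"
    and b0: "\<And>r. i + 1 < 2*r \<Longrightarrow> b r = 0"
    and bpos: "\<And>r. 2*r \<le> i+1 \<Longrightarrow> b r > 0"
    and bnn: "\<And>r. b r \<ge> 0"
  shows "(\<Sum>r\<le>n. b r) * a s * (real i - 2 * real s)
     < (real n - real s) * ((\<Sum>r\<le>n. b r) * (\<Sum>r\<le>s. a r) - (\<Sum>r\<le>n. a r) * (\<Sum>r\<le>s. b r))"
proof -
  define A where "A = (\<Sum>r\<le>n. a r)"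
  define B where "B = (\<Sum>r\<le>n. b r)"
  define F where "F k = (\<Sum>r\<le>k. a r)" for k
  define G where "G k = (\<Sum>r\<le>k. b r)" for k
  define \<psi> where "\<psi> k = (real n - real k) * (B * F k - A * G k) - B * a k * (real i - 2 * real k)" for k
  define \<Phi> where "\<Phi> k = B * ((real i + 1 - 2 * real k) * (real n - real k + 1) + real k * (real n - real k))
      - (real n - real k) * (real n - real k + 1) * A" for k
  define T where "T = (i + 1) div 2"
  have T1: "2 * T \<le> i + 1" "i \<le> 2 * T" unfolding T_def by auto
  have sT: "s < T" using s2 T1 by linarith
  have Tn: "T < n" using T1 iN i1 by linarith
  have c: "real n * A < (real i + 1) * B"
    unfolding A_def B_def by (rule key_c[OF i1 iN E1 E2 a0 bpos bnn])
  have Bpos: "B > 0"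
  proof -
    have "b 0 \<le> B" unfolding B_def by (rule member_le_sum) (auto simp: bnn)
    then show ?thesis using bpos[of 0] by simp
  qed
  have rec: "(real n - real (Suc j) + 1) * \<psi> (Suc j) = (real n - real (Suc j)) * \<psi> j + b (Suc j) * \<Phi> (Suc j)" for j
  proof -
    have F1: "F (Suc j) = F j + a (Suc j)" unfolding F_def by simp
    have G1: "G (Suc j) = G j + b (Suc j)" unfolding G_def by simp
    have e1: "a j * (real i - 2 * real j) - real (Suc j) * b (Suc j) = 0" using E1[of j] by simp
    have e2: "a (Suc j) * (real n - real i + real (Suc j)) - b (Suc j) * (real i + 1 - 2 * real (Suc j)) = 0"
      using E2[of "Suc j"] by simp
    have "(real n - real (Suc j) + 1) * \<psi> (Suc j) - ((real n - real (Suc j)) * \<psi> j + b (Suc j) * \<Phi> (Suc j))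
        = (real n - real (Suc j) + 1) * B * (a (Suc j) * (real n - real i + real (Suc j)) - b (Suc j) * (real i + 1 - 2 * real (Suc j)))
          + (real n - real (Suc j)) * B * (a j * (real i - 2 * real j) - real (Suc j) * b (Suc j))"
      unfolding \<psi>_def \<Phi>_def F1 G1 by (simp add: algebra_simps)
    then show ?thesis using e1 e2 by simp
  qed
  have base: "(real n + 1) * \<psi> 0 = b 0 * \<Phi> 0"
  proof -
    have e2: "a 0 * (real n - real i) - b 0 * (real i + 1) = 0" using E2[of 0] by simp
    have "(real n + 1) * \<psi> 0 - b 0 * \<Phi> 0 = (real n + 1) * B * (a 0 * (real n - real i) - b 0 * (real i + 1))"
      unfolding \<psi>_def \<Phi>_def F_def G_def by (simp add: algebra_simps)
    then show ?thesis using e2 by simp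
  qed
  have top: "\<psi> T = 0"
  proof -
    have FT: "F T = A" unfolding F_def A_def
      by (rule sum.mono_neutral_left) (use Tn T1 in \<open>auto intro!: a0\<close>)
    have GT: "G T = B" unfolding G_def B_def
      by (rule sum.mono_neutral_left) (use Tn T1 in \<open>auto intro!: b0\<close>)
    have "a T * (real i - 2 * real T) = 0"
    proof (cases "i = 2 * T")
      case True then show ?thesis by simp
    next
      case False then have "i < 2 * T" using T1 by simp
      then show ?thesis using a0 by simp
    qed
    then have "B * a T * (real i - 2 * real T) = 0" by (simp add: mult.assoc)
    then show ?thesis unfolding \<psi>_def FT GT by simp
  qed
  have mono: "\<Phi> (Suc j) < 0" if j: "Suc j < n" and P: "\<Phi> j \<le> 0" for j
  proof -
    define D where "D k = (real n - real k) * (real n - real k + 1)" for k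
    have id: "D j * \<Phi> (Suc j) - D (Suc j) * \<Phi> j
        = - B * (real n - real j) * ((real n - real j + 1) * (real n - real i) + 2 * real j)"
      unfolding D_def \<Phi>_def by (simp add: algebra_simps)
    have pos1: "real n - real j > 0" "real n - real (Suc j) > 0" using j by auto
    have "(real n - real j + 1) * (real n - real i) + 2 * real j > 0"
      using pos1 iN by (simp add: add_pos_nonneg)
    then have "B * (real n - real j) * ((real n - real j + 1) * (real n - real i) + 2 * real j) > 0"
      using Bpos pos1 by simp
    moreover have "D (Suc j) * \<Phi> j \<le> 0"
    proof -
      have "D (Suc j) \<ge> 0" unfolding D_def using pos1 by simp
      then show ?thesis using P by (simp add: mult_nonneg_nonpos)
    qed
    ultimately have "D j * \<Phi> (Suc j) < 0" using id by linarith
    moreover have "D j > 0" unfolding D_def using pos1 by simp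
    ultimately show ?thesis by (simp add: mult_less_0_iff)
  qed
  have "\<psi> s > 0"
  proof (cases "\<forall>k\<le>s. \<Phi> k \<ge> 0")
    case True
    have "\<forall>k. k \<le> s \<longrightarrow> \<psi> k > 0"
    proof
      fix k show "k \<le> s \<longrightarrow> \<psi> k > 0"
      proof (induction k)
        case 0
        have "\<Phi> 0 = (real n + 1) * ((real i + 1) * B - real n * A)"
          unfolding \<Phi>_def by (simp add: algebra_simps)
        then have "\<Phi> 0 > 0" using c by simp
        then have "(real n + 1) * \<psi> 0 > 0" using base bpos[of 0] by simp
        then show ?case by (simp add: zero_less_mult_iff)
      next
        case (Suc k)
        show ?case
        proof
          assume k: "Suc k \<le> s"
          then have pk: "\<psi> k > 0" using Suc by simp
          have "\<Phi> (Suc k) \<ge> 0" using True k by simp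
          then have "b (Suc k) * \<Phi> (Suc k) \<ge> 0" using bnn by simp
          moreover have "real n - real (Suc k) > 0" using k sT Tn by simp
          ultimately have "(real n - real (Suc k) + 1) * \<psi> (Suc k) > 0"
            using rec[of k] pk by (simp add: add_pos_nonneg)
          moreover have "real n - real (Suc k) + 1 > 0" using k sT Tn by simp
          ultimately show "\<psi> (Suc k) > 0" by (simp add: zero_less_mult_iff)
        qed
      qed
    qed
    then show ?thesis by simp
  next
    case False
    then obtain k where k: "k \<le> s" "\<Phi> k < 0" by (auto simp: not_le)
    have neg: "\<forall>j. k \<le> j \<and> j \<le> T \<longrightarrow> \<Phi> j < 0"
    proof
      fix j show "k \<le> j \<and> j \<le> T \<longrightarrow> \<Phi> j < 0"
      proof (induction j)
        case 0 then show ?case using k by auto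
      next
        case (Suc j)
        show ?case
        proof
          assume h: "k \<le> Suc j \<and> Suc j \<le> T"
          show "\<Phi> (Suc j) < 0"
          proof (cases "k = Suc j")
            case True then show ?thesis using k by simp
          next
            case False
            then have "\<Phi> j < 0" using Suc h by simp
            then show ?thesis using mono[of j] h Tn by simp
          qed
        qed
      qed
    qed
    have down: "\<forall>d. Suc d \<le> T - s \<longrightarrow> \<psi> (T - Suc d) > 0 \<and> \<psi> (T - d) \<ge> 0"
    proof
      fix d show "Suc d \<le> T - s \<longrightarrow> \<psi> (T - Suc d) > 0 \<and> \<psi> (T - d) \<ge> 0"
      proof (induction d)
        case 0
        show ?case
        proof
          assume "Suc 0 \<le> T - s"
          define j where "j = T - 1"
          have jT: "Suc j = T" unfolding j_def using sT by simp
          have "\<Phi> (Suc j) < 0" using neg jT k sT by simp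
          moreover have "b (Suc j) > 0" using bpos T1 jT by simp
          ultimately have "b (Suc j) * \<Phi> (Suc j) < 0" by (simp add: mult_pos_neg)
          then have "(real n - real (Suc j)) * \<psi> j > 0" using rec[of j] top jT by simp
          moreover have "real n - real (Suc j) > 0" using jT Tn by simp
          ultimately have "\<psi> j > 0" by (simp add: zero_less_mult_iff)
          then show "\<psi> (T - Suc 0) > 0 \<and> \<psi> (T - 0) \<ge> 0" using top j_def by simp
        qed
      next
        case (Suc d)
        show ?case
        proof
          assume h: "Suc (Suc d) \<le> T - s"
          then have ih: "\<psi> (T - Suc d) > 0" using Suc by simp
          define j where "j = T - Suc (Suc d)"
          have jT: "Suc j = T - Suc d" unfolding j_def using h by simp
          have "\<Phi> (Suc j) < 0" using neg jT k h by simp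
          moreover have "b (Suc j) > 0" using bpos T1 jT by simp
          ultimately have "b (Suc j) * \<Phi> (Suc j) < 0" by (simp add: mult_pos_neg)
          moreover have "(real n - real (Suc j) + 1) * \<psi> (Suc j) > 0"
          proof -
            have "real n - real (Suc j) + 1 > 0" using jT Tn by simp
            then show ?thesis using ih jT by simp
          qed
          ultimately have "(real n - real (Suc j)) * \<psi> j > 0" using rec[of j] by linarith
          moreover have "real n - real (Suc j) > 0" using jT Tn by simp
          ultimately have "\<psi> j > 0" by (simp add: zero_less_mult_iff)
          then show "\<psi> (T - Suc (Suc d)) > 0 \<and> \<psi> (T - Suc d) \<ge> 0" using ih j_def by simp
        qed
      qed
    qed
    have h: "Suc (T - s - 1) \<le> T - s" using sT by simp
    have "\<psi> (T - Suc (T - s - 1)) > 0" using down h by blast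
    moreover have "T - Suc (T - s - 1) = s" using sT by simp
    ultimately show ?thesis by simp
  qed
  then show ?thesis unfolding \<psi>_def A_def B_def F_def G_def by simp
qed

lemma sum_split_atMost:
  fixes s n :: nat and f :: "nat \<Rightarrow> real"
  assumes "s \<le> n"
  shows "(\<Sum>r\<le>n. f r) = (\<Sum>r\<le>s. f r) + (\<Sum>r\<in>{s<..n}. (f r :: real))"
proof -
  have eq: "{..n} = {..s} \<union> {s<..n}" using assms by (auto simp: not_less intro: order_trans)
  have "(\<Sum>r\<le>n. f r) = sum f ({..s} \<union> {s<..n})" by (simp only: eq)
  also have "\<dots> = (\<Sum>r\<le>s. f r) + (\<Sum>r\<in>{s<..n}. f r)" by (rule sum.union_disjoint) auto
  finally show ?thesis .
qed

lemma sum_atMost_last: "(\<Sum>r\<le>s. f r) = (\<Sum>r<s. f r) + (f (s::nat) :: real)"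
  by (metis lessThan_Suc_atMost sum.lessThan_Suc)

lemma frac_cmp:
  fixes x y p q1 q2 :: real
  assumes "p > 0" "q1 > 0" "q2 > 0" "y * q1 < x * q2"
  shows "y / (p * q2) < x / (p * q1)"
proof -
  have "y / (p * q2) = (y * q1) / (p * q1 * q2)" using assms by (simp add: field_simps)
  also have "\<dots> < (x * q2) / (p * q1 * q2)" using assms by (intro divide_strict_right_mono) auto
  also have "\<dots> = x / (p * q1)" using assms by (simp add: field_simps)
  finally show ?thesis .
qed

theorem mainTheorem10:
  fixes n i s :: nat
  assumes "n \<ge> 2" and "1 \<le> i" and "i \<le> n - 1" and "real s < real i / 2"
  shows "w' n i s < w n i s"
proof -
  have iN: "i < n" using assms(1,3) by simp
  have s2: "2 * s < i" using assms(4) by linarith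
  have sn: "s \<le> n" using s2 iN by simp
  define a where "a r = real (card (Ls n i r))" for r
  define b where "b r = real (card (Ls n (Suc i) r))" for r
  have E1: "\<And>r. a r * (real i - 2 * real r) = real (Suc r) * b (Suc r)"
    unfolding a_def b_def by (rule E1_real)
  have E2: "\<And>r. a r * (real n - real i + real r) = b r * (real i + 1 - 2 * real r)"
    unfolding a_def b_def by (rule E2_real[OF iN])
  have a0: "\<And>r. i < 2*r \<Longrightarrow> a r = 0" unfolding a_def using Ls_empty by simp
  have b0: "\<And>r. i + 1 < 2*r \<Longrightarrow> b r = 0" unfolding b_def using Ls_empty by simp
  have bpos: "\<And>r. 2*r \<le> i+1 \<Longrightarrow> b r > 0" unfolding b_def using Ls_pos iN by simp
  have bnn: "\<And>r. b r \<ge> 0" unfolding b_def by simp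
  have as: "a s > 0" unfolding a_def using Ls_pos[of s i n] s2 iN by simp
  define A where "A = (\<Sum>r\<le>n. a r)"
  define B where "B = (\<Sum>r\<le>n. b r)"
  define F where "F = (\<Sum>r\<le>s. a r)"
  define G where "G = (\<Sum>r\<le>s. b r)"
  have key: "B * a s * (real i - 2 * real s) < (real n - real s) * (B * F - A * G)"
    unfolding A_def B_def F_def G_def by (rule key_main[OF assms(2) iN s2 E1 E2 a0 b0 bpos bnn])
  have cA: "real (card (L n i)) = A" unfolding A_def a_def by (simp add: card_L_sum)
  have cB: "real (card (L n (i+1))) = B" unfolding B_def b_def by (simp add: card_L_sum)
  have cGe1: "real (card (Lge n (i+1) (int s + 1))) = B - G"
    using sum_split_atMost[OF sn, of b] unfolding B_def G_def b_def by (simp add: card_Lge_sum)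
  have cGe0: "real (card (Lge n i (int s + 1))) = A - F"
    using sum_split_atMost[OF sn, of a] unfolding A_def F_def a_def by (simp add: card_Lge_sum)
  have cLe1: "real (card (Lle n (i+1) (int s))) = G"
    unfolding G_def b_def by (simp add: card_Lle_sum)
  have cLe0: "real (card (Lle n i (int s - 1))) = F - a s"
    using sum_atMost_last[of a s] unfolding F_def a_def by (simp add: card_Lle1_sum)
  have cs: "real (card (Ls n i s)) = a s" unfolding a_def by simp
  have Apos: "A > 0"
  proof -
    have "a s \<le> A" unfolding A_def using sn by (intro member_le_sum) (auto simp: a_def)
    then show ?thesis using as by simp
  qed
  have Bpos: "B > 0"
  proof -
    have "b 0 \<le> B" unfolding B_def by (intro member_le_sum) (auto simp: bnn)
    then show ?thesis using bpos[of 0] by simp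
  qed
  have q1: "real i - 2 * real s > 0" using s2 by linarith
  have q2: "real n - real i + real s > 0" using iN by linarith
  have wv: "w n i s = (B * F - A * G) / ((a s * A * B) * (real i - 2 * real s))"
    unfolding w_def cA cB cGe1 cGe0 cs by (simp add: algebra_simps)
  have wv': "w' n i s = (B * a s - (B * F - A * G)) / ((a s * A * B) * (real n - real i + real s))"
    unfolding w'_def cA cB cLe1 cLe0 cs by (simp add: algebra_simps)
  have cross: "(B * a s - (B * F - A * G)) * (real i - 2 * real s) < (B * F - A * G) * (real n - real i + real s)"
  proof -
    have "real n - real s = (real i - 2 * real s) + (real n - real i + real s)" by simp
    then show ?thesis using key by (simp add: algebra_simps)
  qed
  show ?thesis unfolding wv wv'
    by (rule frac_cmp[OF _ q1 q2 cross]) (use as Apos Bpos in simp)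
qed

end
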